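(* Let $\rho\in(0,\infty)$ and $d=d(L)$ with $dL\to\theta\in[0,\infty)$. Let $h\in C^3([0,1])$ and $H(\mu)=\mu(h)$. Then $$\lim_{N/L\to\rho}\ \sup_{\eta\in\Omega_{L,N}}\Big|\mathfrak L_{L,N}\big(H\circ\mu_{L,N}^{(\cdot)}\big)(\eta)-\mu_{L,N}^{(\eta)}(A_\theta h)\Big|=0.$$
   Context: Inclusion process: $\Omega_{L,N}=\{\eta\in\mathbb N_0^L:\sum_x\eta_x=N\}$, $\mathfrak L_{L,N}f(\eta)=\sum_{x\ne y}\eta_x(d+\eta_y)[f(\eta^{x,y})-f(\eta)]$, $\eta^{x,y}=\eta-e^x+e^y$; "$N/L\to\rho$" means $N,L\to\infty$ with $N/L\to\rho$. $\mu^{(\eta)}_{L,N}=\sum_x\frac{\eta_x}N\delta_{\eta_x/N}$, so $\mu^{(\eta)}_{L,N}(h)=\sum_x\frac{\eta_x}Nh(\eta_x/N)$. $A_\theta h(z)=z(1-z)h''(z)+(2-(2+\theta)z)h'(z)+\theta(h(0)-h(z))$. *)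

theory Defs
  imports "HOL-Analysis.Analysis"
begin

definition Omega :: "nat \<Rightarrow> nat \<Rightarrow> (nat \<Rightarrow> nat) set" where
  "Omega L N = {\<eta>. (\<forall>x. L \<le> x \<longrightarrow> \<eta> x = 0) \<and> (\<Sum>x<L. \<eta> x) = N}"

definition move :: "(nat \<Rightarrow> nat) \<Rightarrow> nat \<Rightarrow> nat \<Rightarrow> (nat \<Rightarrow> nat)" where
  "move \<eta> x y = \<eta>(x := \<eta> x - 1, y := \<eta> y + 1)"

definition gen :: "nat \<Rightarrow> real \<Rightarrow> ((nat \<Rightarrow> nat) \<Rightarrow> real) \<Rightarrow> (nat \<Rightarrow> nat) \<Rightarrow> real" where
  "gen L d f \<eta> = (\<Sum>x<L. \<Sum>y\<in>{..<L} - {x}.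
      real (\<eta> x) * (d + real (\<eta> y)) * (f (move \<eta> x y) - f \<eta>))"

definition emp :: "nat \<Rightarrow> nat \<Rightarrow> (nat \<Rightarrow> nat) \<Rightarrow> (real \<Rightarrow> real) \<Rightarrow> real" where
  "emp L N \<eta> g = (\<Sum>x<L. real (\<eta> x) / real N * g (real (\<eta> x) / real N))"

text \<open>The operator A_theta, with h1, h2 the first and second derivatives of h.\<close>
definition A_op :: "real \<Rightarrow> (real \<Rightarrow> real) \<Rightarrow> (real \<Rightarrow> real) \<Rightarrow> (real \<Rightarrow> real) \<Rightarrow> real \<Rightarrow> real" where
  "A_op \<theta> h h1 h2 z = z * (1 - z) * h2 z + (2 - (2 + \<theta>) * z) * h1 z + \<theta> * (h 0 - h z)"

end

theory Submission imports Defs begin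

lemma lip_aux:
  fixes F F' :: "real \<Rightarrow> real"
  assumes der: "\<And>v. v \<in> {0..1} \<Longrightarrow> (F has_real_derivative F' v) (at v within {0..1})"
    and u: "u \<in> {0..1}" and w: "w \<in> {0..1}" and uw: "u \<le> w"
    and bnd: "\<And>v. u \<le> v \<Longrightarrow> v \<le> w \<Longrightarrow> \<bar>F' v\<bar> \<le> K"
  shows "\<bar>F w - F u\<bar> \<le> K * \<bar>w - u\<bar>"
proof -
  have "\<exists>x\<in>{u..w}. F w - F u = (*) (F' x) (w - u)"
  proof (rule mvt_very_simple[OF uw])
    fix x assume "u \<le> x" "x \<le> w"
    hence "x \<in> {0..1}" using u w by auto
    from DERIV_subset[OF der[OF this], of "{u..w}"] u w
    show "(F has_derivative (*) (F' x)) (at x within {u..w})"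
      by (auto intro: has_field_derivative_imp_has_derivative)
  qed
  then obtain x where x: "x \<in> {u..w}" "F w - F u = F' x * (w - u)" by auto
  have "\<bar>F w - F u\<bar> = \<bar>F' x\<bar> * \<bar>w - u\<bar>" using x by (simp add: abs_mult)
  also have "\<dots> \<le> K * \<bar>w - u\<bar>" using bnd x by (intro mult_right_mono) auto
  finally show ?thesis .
qed

lemma lip:
  fixes F F' :: "real \<Rightarrow> real"
  assumes der: "\<And>v. v \<in> {0..1} \<Longrightarrow> (F has_real_derivative F' v) (at v within {0..1})"
    and u: "u \<in> {0..1}" and w: "w \<in> {0..1}"
    and bnd: "\<And>v. min u w \<le> v \<Longrightarrow> v \<le> max u w \<Longrightarrow> \<bar>F' v\<bar> \<le> K"
  shows "\<bar>F w - F u\<bar> \<le> K * \<bar>w - u\<bar>"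
proof (cases "u \<le> w")
  case True
  show ?thesis by (rule lip_aux[OF der u w True]) (use bnd True in auto)
next
  case False
  have "\<bar>F u - F w\<bar> \<le> K * \<bar>u - w\<bar>"
    by (rule lip_aux[OF der w u]) (use bnd False in auto)
  thus ?thesis by (simp add: abs_minus_commute)
qed

lemma taylor3:
  fixes g g1 g2 g3 :: "real \<Rightarrow> real"
  assumes d1: "\<And>v. v \<in> {0..1} \<Longrightarrow> (g has_real_derivative g1 v) (at v within {0..1})"
    and d2: "\<And>v. v \<in> {0..1} \<Longrightarrow> (g1 has_real_derivative g2 v) (at v within {0..1})"
    and d3: "\<And>v. v \<in> {0..1} \<Longrightarrow> (g2 has_real_derivative g3 v) (at v within {0..1})"
    and M: "\<And>v. v \<in> {0..1} \<Longrightarrow> \<bar>g3 v\<bar> \<le> M"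
    and u: "u \<in> {0..1}" and w: "w \<in> {0..1}"
  shows "\<bar>g w - g u - (w - u) * g1 u - (w - u)^2 / 2 * g2 u\<bar> \<le> M * \<bar>w - u\<bar>^3"
proof -
  have b2: "\<bar>g2 v - g2 u\<bar> \<le> M * \<bar>v - u\<bar>" if v: "v \<in> {0..1}" for v
  proof (rule lip[OF d3 u v])
    fix t assume "min u v \<le> t" "t \<le> max u v"
    with u v have "t \<in> {0..1}" by auto
    thus "\<bar>g3 t\<bar> \<le> M" by (rule M)
  qed
  have b1: "\<bar>(g1 v - g1 u - (v - u) * g2 u) - (g1 u - g1 u - (u - u) * g2 u)\<bar> \<le> (M * \<bar>w - u\<bar>) * \<bar>v - u\<bar>"
    if v: "v \<in> {0..1}" and vb: "min u w \<le> v" "v \<le> max u w" for v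
  proof (rule lip[where F' = "\<lambda>t. g2 t - g2 u", OF _ u v])
    show "((\<lambda>t. g1 t - g1 u - (t - u) * g2 u) has_real_derivative g2 t - g2 u) (at t within {0..1})"
      if "t \<in> {0..1}" for t
      using d2[OF that] by (auto intro!: derivative_eq_intros)
    show "\<bar>g2 t - g2 u\<bar> \<le> M * \<bar>w - u\<bar>" if "min u v \<le> t" "t \<le> max u v" for t
    proof -
      have "t \<in> {0..1}" using that u v by auto
      from b2[OF this] have "\<bar>g2 t - g2 u\<bar> \<le> M * \<bar>t - u\<bar>" .
      also have "\<dots> \<le> M * \<bar>w - u\<bar>"
      proof (rule mult_left_mono)
        show "\<bar>t - u\<bar> \<le> \<bar>w - u\<bar>" using that vb by auto
        show "0 \<le> M" using M[of 0] by auto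
      qed
      finally show ?thesis .
    qed
  qed
  have "\<bar>(g w - g u - (w - u) * g1 u - (w - u)^2 / 2 * g2 u) - (g u - g u - (u - u) * g1 u - (u - u)^2 / 2 * g2 u)\<bar>
      \<le> (M * \<bar>w - u\<bar> * \<bar>w - u\<bar>) * \<bar>w - u\<bar>"
  proof (rule lip[where F' = "\<lambda>t. g1 t - g1 u - (t - u) * g2 u", OF _ u w])
    show "((\<lambda>t. g t - g u - (t - u) * g1 u - (t - u)^2 / 2 * g2 u) has_real_derivative g1 t - g1 u - (t - u) * g2 u) (at t within {0..1})"
      if "t \<in> {0..1}" for t
      using d1[OF that] by (auto intro!: derivative_eq_intros simp: power2_eq_square field_simps)
    show "\<bar>g1 t - g1 u - (t - u) * g2 u\<bar> \<le> M * \<bar>w - u\<bar> * \<bar>w - u\<bar>" if "min u w \<le> t" "t \<le> max u w" for t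
    proof -
      have t: "t \<in> {0..1}" using that u w by auto
      have "\<bar>g1 t - g1 u - (t - u) * g2 u\<bar> \<le> (M * \<bar>w - u\<bar>) * \<bar>t - u\<bar>" using b1[OF t that] by simp
      also have "\<dots> \<le> M * \<bar>w - u\<bar> * \<bar>w - u\<bar>"
      proof (rule mult_left_mono)
        show "\<bar>t - u\<bar> \<le> \<bar>w - u\<bar>" using that by auto
        show "0 \<le> M * \<bar>w - u\<bar>" using M[of 0] by auto
      qed
      finally show ?thesis .
    qed
  qed
  thus ?thesis by (simp add: power3_eq_cube mult.assoc)
qed



lemma inner_sum:
  fixes d n :: real and a :: "nat \<Rightarrow> real" and g1 g2 :: "real \<Rightarrow> real"
  assumes n: "n > 0" and fin: "finite A" and sa: "(\<Sum>y\<in>A. a y) = 1"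
  shows "(\<Sum>y\<in>A. (n * a x * (d + n * a y)) * ((g1 (a y) - g1 (a x)) / n + (g2 (a x) + g2 (a y)) / (2 * n^2)))
    = (- d * a x * g1 (a x) + d * a x * g2 (a x) / (2*n)) * card A
      + (- n * a x * g1 (a x) + a x * g2 (a x) / 2)
      + d * a x * (\<Sum>y\<in>A. g1 (a y)) + n * a x * (\<Sum>y\<in>A. a y * g1 (a y))
      + d * a x / (2*n) * (\<Sum>y\<in>A. g2 (a y)) + a x / 2 * (\<Sum>y\<in>A. a y * g2 (a y))"
proof -
  let ?K0 = "- d * a x * g1 (a x) + d * a x * g2 (a x) / (2*n)"
  let ?K1 = "- n * a x * g1 (a x) + a x * g2 (a x) / 2"
  have "(\<Sum>y\<in>A. (n * a x * (d + n * a y)) * ((g1 (a y) - g1 (a x)) / n + (g2 (a x) + g2 (a y)) / (2 * n^2)))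
     = (\<Sum>y\<in>A. ?K0 + ?K1 * a y + (d * a x) * g1 (a y) + (n * a x) * (a y * g1 (a y))
            + (d * a x / (2*n)) * g2 (a y) + (a x / 2) * (a y * g2 (a y)))"
    using n by (intro sum.cong refl) (simp add: field_simps power2_eq_square)
  also have "\<dots> = ?K0 * card A + ?K1 * (\<Sum>y\<in>A. a y) + (d * a x) * (\<Sum>y\<in>A. g1 (a y))
      + (n * a x) * (\<Sum>y\<in>A. a y * g1 (a y)) + (d * a x / (2*n)) * (\<Sum>y\<in>A. g2 (a y))
      + (a x / 2) * (\<Sum>y\<in>A. a y * g2 (a y))"
    by (simp add: sum.distrib sum_distrib_left)
  finally show ?thesis using sa by simp
qed

lemma full_sum:
  fixes d n :: real and a :: "nat \<Rightarrow> real" and g1 g2 :: "real \<Rightarrow> real"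
  assumes n: "n > 0" and fin: "finite A" and sa: "(\<Sum>y\<in>A. a y) = 1"
  shows "(\<Sum>x\<in>A. \<Sum>y\<in>A. (n * a x * (d + n * a y)) * ((g1 (a y) - g1 (a x)) / n + (g2 (a x) + g2 (a y)) / (2 * n^2)))
    = (\<Sum>y\<in>A. a y * g2 (a y)) + d * (\<Sum>y\<in>A. g1 (a y)) - d * card A * (\<Sum>y\<in>A. a y * g1 (a y))
      + d / (2*n) * (card A * (\<Sum>y\<in>A. a y * g2 (a y)) + (\<Sum>y\<in>A. g2 (a y)))"
proof -
  define S1 where "S1 = (\<Sum>y\<in>A. a y * g1 (a y))"
  define S2 where "S2 = (\<Sum>y\<in>A. a y * g2 (a y))"
  define T1 where "T1 = (\<Sum>y\<in>A. g1 (a y))"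
  define T2 where "T2 = (\<Sum>y\<in>A. g2 (a y))"
  have "(\<Sum>x\<in>A. \<Sum>y\<in>A. (n * a x * (d + n * a y)) * ((g1 (a y) - g1 (a x)) / n + (g2 (a x) + g2 (a y)) / (2 * n^2)))
    = (\<Sum>x\<in>A. (- d * card A) * (a x * g1 (a x)) + (d * card A / (2*n)) * (a x * g2 (a x))
       + (- n) * (a x * g1 (a x)) + (1/2) * (a x * g2 (a x)) + (d * T1) * a x + (n * S1) * a x
       + (d / (2*n) * T2) * a x + (S2 / 2) * a x)"
    unfolding S1_def S2_def T1_def T2_def
    by (intro sum.cong refl, subst inner_sum[OF n fin sa]) (simp add: field_simps)
  also have "\<dots> = (- d * card A) * S1 + (d * card A / (2*n)) * S2 + (- n) * S1 + (1/2) * S2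
      + (d * T1) * 1 + (n * S1) * 1 + (d / (2*n) * T2) * 1 + (S2 / 2) * 1"
    unfolding S1_def S2_def sa[symmetric] by (simp add: sum.distrib sum_distrib_left sum_subtractf sum_negf sum_divide_distrib)
  also have "\<dots> = S2 + d * T1 - d * card A * S1 + d / (2*n) * (card A * S2 + T2)"
    using n by (simp add: field_simps)
  finally show ?thesis unfolding S1_def S2_def T1_def T2_def .
qed



lemma sum_upd:
  fixes G :: "'b \<Rightarrow> real"
  assumes "finite A" "x \<in> A"
  shows "(\<Sum>z\<in>A. G ((f(x := p)) z)) = (\<Sum>z\<in>A. G (f z)) - G (f x) + G p"
proof -
  have "(\<Sum>z\<in>A. G ((f(x := p)) z)) = G p + (\<Sum>z\<in>A - {x}. G ((f(x := p)) z))"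
    using assms by (subst sum.remove[of _ x]) auto
  also have "(\<Sum>z\<in>A - {x}. G ((f(x := p)) z)) = (\<Sum>z\<in>A - {x}. G (f z))"
    by (intro sum.cong) auto
  also have "\<dots> = (\<Sum>z\<in>A. G (f z)) - G (f x)"
    using sum.remove[OF assms, of "\<lambda>z. G (f z)"] by simp
  finally show ?thesis by (simp add: algebra_simps)
qed

lemma sum_move:
  fixes G :: "nat \<Rightarrow> real"
  assumes "x < L" "y < L" "x \<noteq> y"
  shows "(\<Sum>z<L. G (move \<eta> x y z)) - (\<Sum>z<L. G (\<eta> z))
     = G (\<eta> x - 1) - G (\<eta> x) + G (\<eta> y + 1) - G (\<eta> y)"
proof -
  have "(\<Sum>z<L. G (move \<eta> x y z)) = (\<Sum>z<L. G ((\<eta>(x := \<eta> x - 1)) z)) - G ((\<eta>(x := \<eta> x - 1)) y) + G (\<eta> y + 1)"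
    unfolding move_def using assms by (intro sum_upd) auto
  also have "(\<Sum>z<L. G ((\<eta>(x := \<eta> x - 1)) z)) = (\<Sum>z<L. G (\<eta> z)) - G (\<eta> x) + G (\<eta> x - 1)"
    using assms by (intro sum_upd) auto
  finally show ?thesis using assms by simp
qed

lemma pair_le:
  assumes eta: "\<eta> \<in> Omega L N" and "x < L" "y < L" "x \<noteq> y"
  shows "\<eta> x + \<eta> y \<le> N"
proof -
  have "\<eta> x + \<eta> y = (\<Sum>z\<in>{x,y}. \<eta> z)" using assms by simp
  also have "\<dots> \<le> (\<Sum>z<L. \<eta> z)" using assms by (intro sum_mono2) auto
  finally show ?thesis using eta by (simp add: Omega_def)
qed

lemma single_le:
  assumes eta: "\<eta> \<in> Omega L N"
  shows "\<eta> x \<le> N"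
proof (cases "x < L")
  case True
  have "\<eta> x = (\<Sum>z\<in>{x}. \<eta> z)" by simp
  also have "\<dots> \<le> (\<Sum>z<L. \<eta> z)" using True by (intro sum_mono2) auto
  finally show ?thesis using eta by (simp add: Omega_def)
next
  case False thus ?thesis using eta by (simp add: Omega_def)
qed



lemma term_bound:
  fixes g g1 g2 :: "real \<Rightarrow> real" and d M :: real
  assumes N: "N > 0" and eta: "\<eta> \<in> Omega L N" and dnn: "d \<ge> 0"
    and tay: "\<And>u w. u \<in> {0..1} \<Longrightarrow> w \<in> {0..1} \<Longrightarrow>
       \<bar>g w - g u - (w - u) * g1 u - (w - u)^2 / 2 * g2 u\<bar> \<le> M * \<bar>w - u\<bar>^3"
    and xy: "x < L" "y < L" "x \<noteq> y"
  shows "\<bar>real (\<eta> x) * (d + real (\<eta> y)) *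
           ((\<Sum>z<L. g (real (move \<eta> x y z) / real N)) - (\<Sum>z<L. g (real (\<eta> z) / real N)))
         - (real N * (real (\<eta> x) / real N) * (d + real N * (real (\<eta> y) / real N))) *
           ((g1 (real (\<eta> y) / real N) - g1 (real (\<eta> x) / real N)) / real N
            + (g2 (real (\<eta> x) / real N) + g2 (real (\<eta> y) / real N)) / (2 * (real N)^2))\<bar>
       \<le> real (\<eta> x) * (d + real (\<eta> y)) * (2 * M / real N ^ 3)"
proof (cases "\<eta> x = 0")
  case True thus ?thesis by simp
next
  case False
  define n where "n = real N"
  have n: "n > 0" using N by (simp add: n_def)
  define a where "a = real (\<eta> x) / n"
  define b where "b = real (\<eta> y) / n"
  have pl: "\<eta> x + \<eta> y \<le> N" by (rule pair_le[OF eta xy])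
  have ex: "real (\<eta> x - 1) = real (\<eta> x) - 1" using False by simp
  have a0: "a - 1/n \<ge> 0" using False n unfolding a_def by (simp add: field_simps)
  have a1: "a \<le> 1" using pl n unfolding a_def n_def by (simp add: field_simps)
  have b0: "b \<ge> 0" using n unfolding b_def by simp
  have b1: "b + 1/n \<le> 1" using pl n False unfolding b_def n_def by (simp add: field_simps)
  have E1: "\<bar>g (a - 1/n) - g a - (-(1/n)) * g1 a - (1/n)^2 / 2 * g2 a\<bar> \<le> M * (1/n)^3"
  proof -
    have i: "1/n > 0" using n by simp
    have u1: "a \<in> {0..1}" unfolding atLeastAtMost_iff using a0 a1 i by (intro conjI; linarith)
    have w1: "a - 1/n \<in> {0..1}" unfolding atLeastAtMost_iff using a0 a1 i by (intro conjI; linarith)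
    from tay[OF u1 w1] show ?thesis using i by (simp add: power2_eq_square)
  qed
  have E2: "\<bar>g (b + 1/n) - g b - (1/n) * g1 b - (1/n)^2 / 2 * g2 b\<bar> \<le> M * (1/n)^3"
  proof -
    have i: "1/n > 0" using n by simp
    have u1: "b \<in> {0..1}" unfolding atLeastAtMost_iff using b0 b1 i by (intro conjI; linarith)
    have w1: "b + 1/n \<in> {0..1}" unfolding atLeastAtMost_iff using b0 b1 i by (intro conjI; linarith)
    from tay[OF u1 w1] show ?thesis using i by simp
  qed
  define c where "c = real (\<eta> x) * (d + real (\<eta> y))"
  have c0: "c \<ge> 0" unfolding c_def using dnn by simp
  have diff: "(\<Sum>z<L. g (real (move \<eta> x y z) / n)) - (\<Sum>z<L. g (real (\<eta> z) / n))
      = g (a - 1/n) - g a + g (b + 1/n) - g b"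
    using sum_move[OF xy, of "\<lambda>k. g (real k / n)" \<eta>] ex n unfolding a_def b_def
    by (simp add: diff_divide_distrib add_divide_distrib, metis add.commute)
  have cm: "real N * (real (\<eta> x) / real N) * (d + real N * (real (\<eta> y) / real N)) = c"
    unfolding c_def using N by simp
  have eq: "(g (a - 1/n) - g a + g (b + 1/n) - g b) - ((g1 b - g1 a) / n + (g2 a + g2 b) / (2 * n^2))
      = (g (a - 1/n) - g a - (-(1/n)) * g1 a - (1/n)^2 / 2 * g2 a)
             + (g (b + 1/n) - g b - (1/n) * g1 b - (1/n)^2 / 2 * g2 b)"
    by (simp add: power_divide diff_divide_distrib add_divide_distrib algebra_simps)
  have "\<bar>c * (g (a - 1/n) - g a + g (b + 1/n) - g b) - c * ((g1 b - g1 a) / n + (g2 a + g2 b) / (2 * n^2))\<bar>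
      = c * \<bar>(g (a - 1/n) - g a - (-(1/n)) * g1 a - (1/n)^2 / 2 * g2 a)
             + (g (b + 1/n) - g b - (1/n) * g1 b - (1/n)^2 / 2 * g2 b)\<bar>"
    unfolding right_diff_distrib[symmetric] eq abs_mult using c0 by simp
  also have "\<dots> \<le> c * (M * (1/n)^3 + M * (1/n)^3)"
    using c0 E1 E2 by (intro mult_left_mono abs_triangle_ineq[THEN order_trans]) auto
  also have "\<dots> = c * (2 * M / n^3)" by (simp add: field_simps)
  finally show ?thesis unfolding diff[unfolded n_def] cm unfolding c_def a_def b_def n_def .
qed



lemma main_bound:
  fixes g g1 g2 :: "real \<Rightarrow> real" and d M \<theta> :: real
  assumes N: "N > 0" and eta: "\<eta> \<in> Omega L N" and dnn: "d \<ge> 0" and M0: "M \<ge> 0"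
    and tay: "\<And>u w. u \<in> {0..1} \<Longrightarrow> w \<in> {0..1} \<Longrightarrow>
       \<bar>g w - g u - (w - u) * g1 u - (w - u)^2 / 2 * g2 u\<bar> \<le> M * \<bar>w - u\<bar>^3"
    and lip1: "\<And>u w. u \<in> {0..1} \<Longrightarrow> w \<in> {0..1} \<Longrightarrow> \<bar>g1 w - g1 u\<bar> \<le> M * \<bar>w - u\<bar>"
    and bd1: "\<And>u. u \<in> {0..1} \<Longrightarrow> \<bar>g1 u\<bar> \<le> M"
    and bd2: "\<And>u. u \<in> {0..1} \<Longrightarrow> \<bar>g2 u\<bar> \<le> M"
  shows "\<bar>gen L d (\<lambda>\<xi>. \<Sum>z<L. g (real (\<xi> z) / real N)) \<eta>
          - (\<Sum>x<L. real (\<eta> x) / real N * (1 - real (\<eta> x) / real N) * g2 (real (\<eta> x) / real N)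
               + \<theta> * (real (\<eta> x) / real N) * (g1 0 - g1 (real (\<eta> x) / real N)))\<bar>
     \<le> 2 * M * (d * L + N) / N^2 + d * M + 2 * M * \<bar>d * L - \<theta>\<bar> + d * L * M / N + d * M / N"
proof -
  define n where "n = real N"
  have n: "n > 0" using N by (simp add: n_def)
  define a where "a = (\<lambda>x. real (\<eta> x) / n)"
  have eta_a: "real (\<eta> x) = n * a x" for x using n by (simp add: a_def)
  have sa: "(\<Sum>x<L. a x) = 1"
  proof -
    have "(\<Sum>x<L. real (\<eta> x)) = n" using eta by (simp add: Omega_def n_def flip: of_nat_sum)
    thus ?thesis using n by (simp add: a_def flip: sum_divide_distrib)
  qed
  have a01: "a x \<in> {0..1}" for x using single_le[OF eta, of x] n by (simp add: a_def n_def)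
  define main where "main = (\<lambda>x y. (n * a x * (d + n * a y)) *
      ((g1 (a y) - g1 (a x)) / n + (g2 (a x) + g2 (a y)) / (2 * n^2)))"
  define c where "c = (\<lambda>x y. n * a x * (d + n * a y))"
  have c0: "c x y \<ge> 0" for x y unfolding c_def using n dnn a01[of x] a01[of y] by simp
  define S1 where "S1 = (\<Sum>y<L. a y * g1 (a y))"
  define S2 where "S2 = (\<Sum>y<L. a y * g2 (a y))"
  define T1 where "T1 = (\<Sum>y<L. g1 (a y))"
  define T2 where "T2 = (\<Sum>y<L. g2 (a y))"
  define Q where "Q = (\<Sum>y<L. a y * a y * g2 (a y))"
  let ?gen = "gen L d (\<lambda>\<xi>. \<Sum>z<L. g (real (\<xi> z) / real N)) \<eta>"
  define K where "K = 2 * M / n^3"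
  \<comment> \<open>Step 1: replace each increment by its second-order expansion\<close>
  have step1: "\<bar>?gen - (\<Sum>x<L. \<Sum>y\<in>{..<L} - {x}. main x y)\<bar> \<le> (\<Sum>x<L. \<Sum>y<L. c x y * K)"
  proof -
    have "\<bar>?gen - (\<Sum>x<L. \<Sum>y\<in>{..<L} - {x}. main x y)\<bar>
       = \<bar>\<Sum>x<L. \<Sum>y\<in>{..<L} - {x}. (real (\<eta> x) * (d + real (\<eta> y)) *
           ((\<Sum>z<L. g (real (move \<eta> x y z) / real N)) - (\<Sum>z<L. g (real (\<eta> z) / real N))) - main x y)\<bar>"
      unfolding gen_def by (simp add: sum_subtractf)
    also have "\<dots> \<le> (\<Sum>x<L. \<bar>\<Sum>y\<in>{..<L} - {x}. (real (\<eta> x) * (d + real (\<eta> y)) *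
           ((\<Sum>z<L. g (real (move \<eta> x y z) / real N)) - (\<Sum>z<L. g (real (\<eta> z) / real N))) - main x y)\<bar>)"
      by (rule sum_abs)
    also have "\<dots> \<le> (\<Sum>x<L. \<Sum>y\<in>{..<L} - {x}. c x y * K)"
    proof (rule sum_mono, rule order_trans[OF sum_abs], rule sum_mono)
      fix x y assume x: "x \<in> {..<L}" and y: "y \<in> {..<L} - {x}"
      have "\<bar>real (\<eta> x) * (d + real (\<eta> y)) *
           ((\<Sum>z<L. g (real (move \<eta> x y z) / real N)) - (\<Sum>z<L. g (real (\<eta> z) / real N))) - main x y\<bar>
          \<le> real (\<eta> x) * (d + real (\<eta> y)) * (2 * M / real N ^ 3)"
        using term_bound[OF N eta dnn tay, of x y] x y unfolding main_def a_def n_def by auto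
      also have "\<dots> = c x y * K" unfolding c_def K_def eta_a n_def by simp
      finally show "\<bar>real (\<eta> x) * (d + real (\<eta> y)) *
           ((\<Sum>z<L. g (real (move \<eta> x y z) / real N)) - (\<Sum>z<L. g (real (\<eta> z) / real N))) - main x y\<bar>
          \<le> c x y * K" .
    qed
    also have "\<dots> \<le> (\<Sum>x<L. \<Sum>y<L. c x y * K)"
      using c0 M0 n unfolding K_def by (intro sum_mono sum_mono2) auto
    finally show ?thesis .
  qed
  have cK: "(\<Sum>x<L. \<Sum>y<L. c x y * K) = 2 * M * (d * L + N) / N^2"
  proof -
    have "(\<Sum>x<L. \<Sum>y<L. c x y * K) = (\<Sum>x<L. (n * K) * a x * (d * L + n * (\<Sum>y<L. a y)))"
      unfolding c_def by (simp add: sum.distrib sum_distrib_left algebra_simps)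
    also have "\<dots> = (n * K) * (d * L + n)"
      by (simp add: sa flip: sum_distrib_left sum_distrib_right)
    finally show ?thesis using n unfolding K_def n_def by (simp add: field_simps power3_eq_cube power2_eq_square)
  qed
  have diag: "(\<Sum>x<L. \<Sum>y\<in>{..<L} - {x}. main x y) = (\<Sum>x<L. \<Sum>y<L. main x y) - (\<Sum>x<L. main x x)"
  proof -
    have "(\<Sum>y\<in>{..<L} - {x}. main x y) = (\<Sum>y<L. main x y) - main x x" if "x < L" for x
      using sum.remove[of "{..<L}" x "main x"] that by simp
    thus ?thesis by (simp add: sum_subtractf)
  qed
  have full: "(\<Sum>x<L. \<Sum>y<L. main x y) = S2 + d * T1 - d * L * S1 + d / (2*n) * (L * S2 + T2)"
    unfolding main_def S1_def S2_def T1_def T2_def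
    using full_sum[OF n _ sa, of d g1 g2] by simp
  have dg: "(\<Sum>x<L. main x x) = d / n * S2 + Q"
  proof -
    have "main x x = d / n * (a x * g2 (a x)) + a x * a x * g2 (a x)" for x
      unfolding main_def using n by (simp add: field_simps power2_eq_square)
    thus ?thesis unfolding S2_def Q_def by (simp add: sum.distrib sum_distrib_left)
  qed
  have tgt: "(\<Sum>x<L. real (\<eta> x) / real N * (1 - real (\<eta> x) / real N) * g2 (real (\<eta> x) / real N)
               + \<theta> * (real (\<eta> x) / real N) * (g1 0 - g1 (real (\<eta> x) / real N)))
           = S2 - Q + \<theta> * g1 0 - \<theta> * S1"
  proof -
    have "(\<Sum>x<L. real (\<eta> x) / real N * (1 - real (\<eta> x) / real N) * g2 (real (\<eta> x) / real N)
               + \<theta> * (real (\<eta> x) / real N) * (g1 0 - g1 (real (\<eta> x) / real N)))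
        = (\<Sum>x<L. a x * g2 (a x) - a x * a x * g2 (a x) + (\<theta> * g1 0) * a x - \<theta> * (a x * g1 (a x)))"
      unfolding a_def n_def by (intro sum.cong refl) (simp add: algebra_simps)
    also have "\<dots> = S2 - Q + (\<theta> * g1 0) * (\<Sum>x<L. a x) - \<theta> * S1"
      unfolding S2_def Q_def S1_def by (simp add: sum.distrib sum_subtractf sum_distrib_left)
    finally show ?thesis using sa by simp
  qed
  have ident: "(S2 + d * T1 - d * L * S1 + d / (2*n) * (L * S2 + T2)) - (d / n * S2 + Q) - (S2 - Q + \<theta> * g1 0 - \<theta> * S1)
     = d * (T1 - L * g1 0) + (d * L - \<theta>) * (g1 0 - S1) + d / (2*n) * (L * S2 + T2) - d / n * S2"
    by (simp add: algebra_simps)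
  have bT1: "\<bar>T1 - L * g1 0\<bar> \<le> M"
  proof -
    have "T1 - L * g1 0 = (\<Sum>y<L. g1 (a y) - g1 0)" unfolding T1_def by (simp add: sum_subtractf)
    also have "\<bar>\<dots>\<bar> \<le> (\<Sum>y<L. \<bar>g1 (a y) - g1 0\<bar>)" by (rule sum_abs)
    also have "\<dots> \<le> (\<Sum>y<L. M * a y)"
    proof (rule sum_mono)
      fix y
      have "\<bar>g1 (a y) - g1 0\<bar> \<le> M * \<bar>a y - 0\<bar>" by (rule lip1) (use a01[of y] in auto)
      thus "\<bar>g1 (a y) - g1 0\<bar> \<le> M * a y" using a01[of y] by simp
    qed
    also have "\<dots> = M" using sa by (simp flip: sum_distrib_left)
    finally show ?thesis .
  qed
  have bS: "\<bar>(\<Sum>y<L. a y * G (a y))\<bar> \<le> M" if G: "\<And>u. u \<in> {0..1} \<Longrightarrow> \<bar>G u\<bar> \<le> M" for G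
  proof -
    have "\<bar>(\<Sum>y<L. a y * G (a y))\<bar> \<le> (\<Sum>y<L. \<bar>a y * G (a y)\<bar>)" by (rule sum_abs)
    also have "\<dots> \<le> (\<Sum>y<L. M * a y)"
    proof (rule sum_mono)
      fix y
      have "\<bar>a y * G (a y)\<bar> = a y * \<bar>G (a y)\<bar>" using a01[of y] by (simp add: abs_mult)
      also have "\<dots> \<le> a y * M" using a01[of y] G[OF a01[of y]] by (intro mult_left_mono) auto
      finally show "\<bar>a y * G (a y)\<bar> \<le> M * a y" by (simp add: mult.commute)
    qed
    also have "\<dots> = M" using sa by (simp flip: sum_distrib_left)
    finally show ?thesis .
  qed
  have bS1: "\<bar>S1\<bar> \<le> M" unfolding S1_def by (rule bS[OF bd1])
  have bS2: "\<bar>S2\<bar> \<le> M" unfolding S2_def by (rule bS[OF bd2])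
  have bT2: "\<bar>T2\<bar> \<le> L * M"
  proof -
    have "\<bar>T2\<bar> \<le> (\<Sum>y<L. \<bar>g2 (a y)\<bar>)" unfolding T2_def by (rule sum_abs)
    also have "\<dots> \<le> (\<Sum>y<L. M)" using bd2 a01 by (intro sum_mono) auto
    finally show ?thesis by simp
  qed
  have g10: "\<bar>g1 0\<bar> \<le> M" using bd1[of 0] by simp
  have r1: "\<bar>d * (T1 - L * g1 0)\<bar> \<le> d * M" using bT1 dnn by (simp add: abs_mult mult_left_mono)
  have r2: "\<bar>(d * L - \<theta>) * (g1 0 - S1)\<bar> \<le> 2 * M * \<bar>d * L - \<theta>\<bar>"
  proof -
    have "\<bar>g1 0 - S1\<bar> \<le> 2 * M" using g10 bS1 by linarith
    from mult_right_mono[OF this abs_ge_zero[of "d * L - \<theta>"]]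
    show ?thesis by (simp add: abs_mult mult.commute)
  qed
  have r3: "\<bar>d / (2*n) * (L * S2 + T2)\<bar> \<le> d * L * M / n"
  proof -
    have "real L * \<bar>S2\<bar> \<le> real L * M" by (rule mult_left_mono[OF bS2]) simp
    hence "\<bar>L * S2 + T2\<bar> \<le> L * M + L * M"
      using bT2 abs_triangle_ineq[of "L * S2" T2] abs_mult[of "real L" S2] by linarith
    have "\<bar>d / (2*n) * (L * S2 + T2)\<bar> = d / (2*n) * \<bar>L * S2 + T2\<bar>" using n dnn by (simp add: abs_mult)
    also have "\<dots> \<le> d / (2*n) * (L * M + L * M)" using n dnn \<open>\<bar>L * S2 + T2\<bar> \<le> L * M + L * M\<close>
      by (intro mult_left_mono) auto
    also have "\<dots> = d * L * M / n" using n by (simp add: field_simps)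
    finally show ?thesis .
  qed
  have r4: "\<bar>d / n * S2\<bar> \<le> d * M / n"
  proof -
    have "\<bar>d / n\<bar> * \<bar>S2\<bar> \<le> \<bar>d / n\<bar> * M" using bS2 by (intro mult_left_mono) auto
    thus ?thesis using n dnn by (simp add: abs_mult)
  qed
  define m where "m = (\<Sum>x<L. \<Sum>y\<in>{..<L} - {x}. main x y)"
  define tg where "tg = (\<Sum>x<L. real (\<eta> x) / real N * (1 - real (\<eta> x) / real N) * g2 (real (\<eta> x) / real N)
               + \<theta> * (real (\<eta> x) / real N) * (g1 0 - g1 (real (\<eta> x) / real N)))"
  have mt: "m - tg = d * (T1 - L * g1 0) + (d * L - \<theta>) * (g1 0 - S1) + d / (2*n) * (L * S2 + T2) - d / n * S2"
    unfolding m_def tg_def tgt ident[symmetric] diag full dg ..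
  have tri: "\<bar>x - z\<bar> \<le> \<bar>x - y\<bar> + \<bar>y - z\<bar>" for x y z :: real by arith
  have abs4: "\<bar>a1 + a2 + a3 - a4\<bar> \<le> \<bar>a1\<bar> + \<bar>a2\<bar> + \<bar>a3\<bar> + \<bar>a4\<bar>" for a1 a2 a3 a4 :: real
    by arith
  have "\<bar>m - tg\<bar> \<le> d * M + 2 * M * \<bar>d * L - \<theta>\<bar> + d * L * M / n + d * M / n"
  proof -
    have "\<bar>m - tg\<bar> \<le> \<bar>d * (T1 - L * g1 0)\<bar> + \<bar>(d * L - \<theta>) * (g1 0 - S1)\<bar> + \<bar>d / (2*n) * (L * S2 + T2)\<bar> + \<bar>d / n * S2\<bar>"
      unfolding mt by (rule abs4)
    thus ?thesis using r1 r2 r3 r4 by linarith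
  qed
  moreover have "\<bar>?gen - m\<bar> \<le> 2 * M * (d * L + N) / N^2" using step1 cK unfolding m_def by simp
  moreover have "\<bar>?gen - tg\<bar> \<le> \<bar>?gen - m\<bar> + \<bar>m - tg\<bar>" by (rule tri)
  ultimately show ?thesis unfolding tg_def n_def by linarith
qed


lemma cont_bound:
  fixes f :: "real \<Rightarrow> real"
  assumes "continuous_on {0..1} f"
  shows "\<exists>B\<ge>0. \<forall>u\<in>{0..1}. \<bar>f u\<bar> \<le> B"
proof -
  have "bounded (f ` {0..1})" by (intro compact_imp_bounded compact_continuous_image assms) simp
  then obtain a where "\<forall>x\<in>f ` {0..1}. norm x \<le> a" by (auto simp: bounded_iff)
  thus ?thesis by (intro exI[of _ "max a 0"]) auto
qed

theorem lemma2p2: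
  fixes \<rho> \<theta> :: real and d :: "nat \<Rightarrow> real"
    and h h1 h2 h3 :: "real \<Rightarrow> real"
    and Ls Ns :: "nat \<Rightarrow> nat"
  assumes rho: "\<rho> > 0"
    and theta: "\<theta> \<ge> 0"
    and dpos: "\<And>L. d L > 0"
    and dlim: "(\<lambda>L. d L * real L) \<longlonglongrightarrow> \<theta>"
    and d1: "\<And>z. z \<in> {0..1} \<Longrightarrow> (h has_real_derivative h1 z) (at z within {0..1})"
    and d2: "\<And>z. z \<in> {0..1} \<Longrightarrow> (h1 has_real_derivative h2 z) (at z within {0..1})"
    and d3: "\<And>z. z \<in> {0..1} \<Longrightarrow> (h2 has_real_derivative h3 z) (at z within {0..1})"
    and c3: "continuous_on {0..1} h3"
    and Linf: "filterlim Ls at_top sequentially"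
    and Ninf: "filterlim Ns at_top sequentially"
    and ratio: "(\<lambda>k. real (Ns k) / real (Ls k)) \<longlonglongrightarrow> \<rho>"
  shows "(\<lambda>k. SUP \<eta>\<in>Omega (Ls k) (Ns k).
            \<bar>gen (Ls k) (d (Ls k)) (\<lambda>\<xi>. emp (Ls k) (Ns k) \<xi> h) \<eta>
             - emp (Ls k) (Ns k) \<eta> (A_op \<theta> h h1 h2)\<bar>) \<longlonglongrightarrow> 0"
proof -
  define g where "g = (\<lambda>u::real. u * h u)"
  define g1 where "g1 = (\<lambda>u::real. h u + u * h1 u)"
  define g2 where "g2 = (\<lambda>u::real. 2 * h1 u + u * h2 u)"
  define g3 where "g3 = (\<lambda>u::real. 3 * h2 u + u * h3 u)"
  have e1: "(g has_real_derivative g1 z) (at z within {0..1})" if "z \<in> {0..1}" for z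
    unfolding g_def g1_def using d1[OF that] by (auto intro!: derivative_eq_intros)
  have e2: "(g1 has_real_derivative g2 z) (at z within {0..1})" if "z \<in> {0..1}" for z
    unfolding g1_def g2_def using d1[OF that] d2[OF that] by (auto intro!: derivative_eq_intros)
  have e3: "(g2 has_real_derivative g3 z) (at z within {0..1})" if "z \<in> {0..1}" for z
    unfolding g2_def g3_def using d2[OF that] d3[OF that] by (auto intro!: derivative_eq_intros)
  have cg1: "continuous_on {0..1} g1" by (rule DERIV_continuous_on[OF e2])
  have cg2: "continuous_on {0..1} g2" by (rule DERIV_continuous_on[OF e3])
  have ch2: "continuous_on {0..1} h2" by (rule DERIV_continuous_on[OF d3])
  have cg3: "continuous_on {0..1} g3" unfolding g3_def by (intro continuous_intros ch2 c3)
  obtain B1 where B1: "B1 \<ge> 0" "\<And>u. u \<in> {0..1} \<Longrightarrow> \<bar>g1 u\<bar> \<le> B1" using cont_bound[OF cg1] by auto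
  obtain B2 where B2: "B2 \<ge> 0" "\<And>u. u \<in> {0..1} \<Longrightarrow> \<bar>g2 u\<bar> \<le> B2" using cont_bound[OF cg2] by auto
  obtain B3 where B3: "B3 \<ge> 0" "\<And>u. u \<in> {0..1} \<Longrightarrow> \<bar>g3 u\<bar> \<le> B3" using cont_bound[OF cg3] by auto
  define M where "M = B1 + B2 + B3"
  have M0: "M \<ge> 0" using B1 B2 B3 by (simp add: M_def)
  have bd1: "\<bar>g1 u\<bar> \<le> M" if "u \<in> {0..1}" for u using B1 B2 B3 that unfolding M_def by force
  have bd2: "\<bar>g2 u\<bar> \<le> M" if "u \<in> {0..1}" for u using B1 B2 B3 that unfolding M_def by force
  have bd3: "\<bar>g3 u\<bar> \<le> M" if "u \<in> {0..1}" for u using B1 B2 B3 that unfolding M_def by force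
  have tay: "\<bar>g w - g u - (w - u) * g1 u - (w - u)^2 / 2 * g2 u\<bar> \<le> M * \<bar>w - u\<bar>^3"
    if "u \<in> {0..1}" "w \<in> {0..1}" for u w
    by (rule taylor3[OF e1 e2 e3 bd3 that])
  have lip1: "\<bar>g1 w - g1 u\<bar> \<le> M * \<bar>w - u\<bar>" if u: "u \<in> {0..1}" and w: "w \<in> {0..1}" for u w
  proof (rule lip[OF e2 u w])
    fix t assume "min u w \<le> t" "t \<le> max u w"
    with u w have "t \<in> {0..1}" by auto
    thus "\<bar>g2 t\<bar> \<le> M" by (rule bd2)
  qed
  have emp_h: "emp L N \<xi> h = (\<Sum>z<L. g (real (\<xi> z) / real N))" for L N \<xi>
    unfolding emp_def g_def ..
  have emp_A: "emp L N \<eta> (A_op \<theta> h h1 h2) =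
      (\<Sum>x<L. real (\<eta> x) / real N * (1 - real (\<eta> x) / real N) * g2 (real (\<eta> x) / real N)
               + \<theta> * (real (\<eta> x) / real N) * (g1 0 - g1 (real (\<eta> x) / real N)))" for L N \<eta>
  proof -
    have pt: "a * A_op \<theta> h h1 h2 a = a * (1 - a) * g2 a + \<theta> * a * (g1 0 - g1 a)" for a
      unfolding A_op_def g1_def g2_def by (simp add: algebra_simps)
    show ?thesis unfolding emp_def by (intro sum.cong refl) (rule pt)
  qed
  define D where "D = (\<lambda>k. d (Ls k) * real (Ls k))"
  define dd where "dd = (\<lambda>k. d (Ls k))"
  define iN where "iN = (\<lambda>k. inverse (real (Ns k)))"
  define B where "B = (\<lambda>k. 2 * M * (D k * iN k ^ 2 + iN k) + dd k * M + 2 * M * \<bar>D k - \<theta>\<bar>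
                          + D k * M * iN k + dd k * M * iN k)"
  define f where "f = (\<lambda>k. SUP \<eta>\<in>Omega (Ls k) (Ns k).
            \<bar>gen (Ls k) (d (Ls k)) (\<lambda>\<xi>. emp (Ls k) (Ns k) \<xi> h) \<eta>
             - emp (Ls k) (Ns k) \<eta> (A_op \<theta> h h1 h2)\<bar>)"
  have evL: "eventually (\<lambda>k. Ls k \<ge> 1) sequentially" using Linf by (simp add: filterlim_at_top)
  have evN: "eventually (\<lambda>k. Ns k \<ge> 1) sequentially" using Ninf by (simp add: filterlim_at_top)
  have Dlim: "D \<longlonglongrightarrow> \<theta>" unfolding D_def using filterlim_compose[OF dlim Linf] by (simp add: o_def)
  have iNlim: "iN \<longlonglongrightarrow> 0" unfolding iN_def
    by (intro tendsto_inverse_0_at_top filterlim_compose[OF filterlim_real_sequentially Ninf])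
  have iLlim: "(\<lambda>k. inverse (real (Ls k))) \<longlonglongrightarrow> 0"
    by (intro tendsto_inverse_0_at_top filterlim_compose[OF filterlim_real_sequentially Linf])
  have ddlim: "dd \<longlonglongrightarrow> 0"
  proof -
    have "(\<lambda>k. D k * inverse (real (Ls k))) \<longlonglongrightarrow> \<theta> * 0" by (intro tendsto_intros Dlim iLlim)
    moreover have "eventually (\<lambda>k. D k * inverse (real (Ls k)) = dd k) sequentially"
      using evL by eventually_elim (simp add: D_def dd_def)
    ultimately show ?thesis by (simp add: tendsto_cong)
  qed
  have Blim: "B \<longlonglongrightarrow> 0"
  proof -
    have "B \<longlonglongrightarrow> 2 * M * (\<theta> * 0 ^ 2 + 0) + 0 * M + 2 * M * \<bar>\<theta> - \<theta>\<bar> + \<theta> * M * 0 + 0 * M * 0"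
      unfolding B_def by (intro tendsto_intros Dlim iNlim ddlim)
    thus ?thesis by simp
  qed
  have bound: "eventually (\<lambda>k. 0 \<le> f k \<and> f k \<le> B k) sequentially"
    using evL evN
  proof eventually_elim
    case (elim k)
    let ?L = "Ls k" and ?N = "Ns k"
    let ?F = "\<lambda>\<eta>. \<bar>gen ?L (d ?L) (\<lambda>\<xi>. emp ?L ?N \<xi> h) \<eta> - emp ?L ?N \<eta> (A_op \<theta> h h1 h2)\<bar>"
    have le: "?F \<eta> \<le> B k" if eta: "\<eta> \<in> Omega ?L ?N" for \<eta>
    proof -
      have "?F \<eta> \<le> 2 * M * (d ?L * ?L + ?N) / ?N^2 + d ?L * M + 2 * M * \<bar>d ?L * ?L - \<theta>\<bar>
                + d ?L * ?L * M / ?N + d ?L * M / ?N"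
        unfolding emp_h emp_A
        by (rule main_bound[OF _ eta _ M0 tay lip1 bd1 bd2]) (use elim dpos[of "Ls k"] in auto)
      also have "\<dots> = B k" unfolding B_def D_def dd_def iN_def using elim
        by (simp add: field_simps power2_eq_square)
      finally show ?thesis .
    qed
    define \<eta>0 where "\<eta>0 = (\<lambda>z::nat. if z = 0 then ?N else 0)"
    have e0: "\<eta>0 \<in> Omega ?L ?N" using elim unfolding Omega_def \<eta>0_def by auto
    have bdd: "bdd_above (?F ` Omega ?L ?N)" using le by (intro bdd_aboveI2) auto
    have "0 \<le> f k" unfolding f_def by (rule cSUP_upper2[OF bdd e0]) simp
    moreover have "f k \<le> B k" unfolding f_def using le e0 by (intro cSUP_least) auto
    ultimately show ?case by simp
  qed
  have "f \<longlonglongrightarrow> 0"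
  proof (rule tendsto_sandwich[OF _ _ tendsto_const Blim])
    show "eventually (\<lambda>k. 0 \<le> f k) sequentially" using bound by (rule eventually_mono) simp
    show "eventually (\<lambda>k. f k \<le> B k) sequentially" using bound by (rule eventually_mono) simp
  qed
  thus ?thesis unfolding f_def .
qed


end
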